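(* Let $\mathbf{J}\in\mathbb{R}^{n\times n}$ be a real symmetric matrix with zero diagonal, and let $\alpha,\beta>0$ be such that $\lambda_{\min}(\mathbf{J}+\alpha\mathbf{I})>0$. Let $\{\boldsymbol{x}^{(k)}\}_{k\ge0}$ be the DOCH iterates starting from an arbitrary $\boldsymbol{x}^{(0)}\in\mathbb{R}^n$. Then every limit point $\boldsymbol{x}^*$ of $\{\boldsymbol{x}^{(k)}\}$ is a critical point of $\mathcal{H}$, i.e. $\nabla\mathcal{H}(\boldsymbol{x}^* )=\mathbf{0}$.
   Context: Let $f(\boldsymbol{x})=\frac{\beta}{4}\sum_i x_i^4$, $g(\boldsymbol{x})=\frac12\boldsymbol{x}^\top(\mathbf{J}+\alpha\mathbf{I})\boldsymbol{x}$ and $\mathcal{H}=f-g$ (equivalently $\mathcal{H}(\boldsymbol{x})=\frac{\beta}{4}\sum_i x_i^4-\frac{\alpha}{2}\sum_i x_i^2-\frac12\boldsymbol{x}^\top\mathbf{J}\boldsymbol{x}$). The DOCH iterates are defined by $\boldsymbol{x}^{(k+1)}$ being the minimizer of $F_k(\boldsymbol{x})=f(\boldsymbol{x})-g(\boldsymbol{x}^{(k)})-\nabla g(\boldsymbol{x}^{(k)})^\top(\boldsymbol{x}-\boldsymbol{x}^{(k)})$; explicitly, $\boldsymbol{x}^{(k+1)}=\varphi(\beta^{-1}(\mathbf{J}+\alpha\mathbf{I})\boldsymbol{x}^{(k)})$ with $\varphi$ the componentwise real cube root. *)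

theory Defs
  imports "HOL-Analysis.Analysis"
begin

definition lambda_min :: "real^'n^'n \<Rightarrow> real" where
  "lambda_min A = Inf {l. \<exists>v. v \<noteq> 0 \<and> A *v v = l *\<^sub>R v}"

definition H_obj :: "real^'n^'n \<Rightarrow> real \<Rightarrow> real \<Rightarrow> real^'n \<Rightarrow> real" where
  "H_obj J alpha beta x =
     beta / 4 * (\<Sum>i\<in>UNIV. (x $ i) ^ 4) - alpha / 2 * (\<Sum>i\<in>UNIV. (x $ i) ^ 2)
     - 1/2 * (x \<bullet> (J *v x))"

text \<open>DOCH iterates: x(k+1) = phi(beta^{-1} (J + alpha I) x(k)), phi = componentwise
real cube root (root 3 is the odd real root, sign preserving).\<close>
fun doch :: "real^'n^'n \<Rightarrow> real \<Rightarrow> real \<Rightarrow> real^'n \<Rightarrow> nat \<Rightarrow> real^'n" where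
  "doch J alpha beta x0 0 = x0"
| "doch J alpha beta x0 (Suc k) =
     (\<chi> i. root 3 ((((J + alpha *\<^sub>R mat 1) *v doch J alpha beta x0 k) $ i) / beta))"

end

theory Submission imports Defs begin

lemma symA: fixes A :: "real^'n^'n" assumes "transpose A = A"
  shows "x \<bullet> (A *v y) = y \<bullet> (A *v x)"
proof -
  have "x \<bullet> (A *v y) = (x v* A) \<bullet> y" by (simp add: dot_lmul_matrix)
  also have "x v* A = A *v x" using vector_transpose_matrix[of x A] assms by simp
  finally show ?thesis by (simp add: inner_commute)
qed

lemma Amul: "(J + alpha *\<^sub>R mat 1) *v (x::real^'n) = J *v x + alpha *\<^sub>R x"
  by (simp add: matrix_vector_mult_add_rdistrib flip: scaleR_matrix_vector_assoc)

lemma H_alt: "H_obj J alpha beta x = beta/4 * (\<Sum>i\<in>UNIV. (x $ i) ^ 4) - 1/2 * (x \<bullet> ((J + alpha *\<^sub>R mat 1) *v x))"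
  unfolding H_obj_def Amul by (simp add: inner_add_right inner_vec_def power2_eq_square algebra_simps sum_distrib_left sum.distrib)

lemma e_eq: "(a::real)^4/4 - b^4/4 - b^3*(a-b) = (a-b)^2*((a+b)^2+2*b^2)/4" by algebra

lemma e_nonneg: "(a::real)^4/4 - b^4/4 - b^3*(a-b) \<ge> 0"
  unfolding e_eq by simp

lemma e_zero: "(a::real)^4/4 - b^4/4 - b^3*(a-b) = 0 \<Longrightarrow> a = b"
proof -
  assume h: "(a::real)^4/4 - b^4/4 - b^3*(a-b) = 0"
  hence "(a-b)^2 = 0 \<or> (a+b)^2+2*b^2 = 0" unfolding e_eq by simp
  moreover have "(a+b)^2+2*b^2 = 0 \<Longrightarrow> a = b"
  proof -
    assume "(a+b)^2+2*b^2 = 0"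
    hence "(a+b)^2 = 0" "b^2 = 0" using zero_le_power2[of "a+b"] zero_le_power2[of b] by linarith+
    thus "a = b" by simp
  qed
  ultimately show "a = b" by auto
qed

lemma psd: fixes A :: "real^'n^'n" assumes sym: "transpose A = A" and lm: "lambda_min A > 0"
  shows "x \<bullet> (A *v x) \<ge> 0"
proof -
  define q where "q = (\<lambda>v::real^'n. v \<bullet> (A *v v))"
  have cont: "continuous_on (sphere 0 1) q" unfolding q_def
    by (intro continuous_intros linear_continuous_on matrix_vector_mul_linear linear_conv_bounded_linear[THEN iffD1])
  obtain k :: 'n where True by simp
  have ne: "sphere (0::real^'n) 1 \<noteq> {}" proof -
    have "axis k (1::real) \<in> sphere 0 1" by simp
    thus ?thesis by blast
  qed
  obtain v0 where v0: "v0 \<in> sphere 0 1" and min: "\<And>y. y \<in> sphere 0 1 \<Longrightarrow> q v0 \<le> q y"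
    using continuous_attains_inf[OF compact_sphere ne cont] by blast
  have nv0: "norm v0 = 1" using v0 by simp
  define m where "m = q v0"
  have qs: "q (c *\<^sub>R w) = c^2 * q w" for c w
    by (simp add: q_def matrix_vector_mult_scaleR power2_eq_square)
  have lb: "m * (u \<bullet> u) \<le> q u" for u
  proof (cases "u = 0")
    case True then show ?thesis by (simp add: q_def)
  next
    case False
    define w where "w = (1 / norm u) *\<^sub>R u"
    have "norm w = 1" using False by (simp add: w_def)
    hence "m \<le> q w" using min[of w] by (simp add: m_def)
    have u: "u = norm u *\<^sub>R w" using False by (simp add: w_def)
    have "q u = (norm u)^2 * q w" by (subst u, rule qs)
    moreover have "u \<bullet> u = (norm u)^2" by (simp add: power2_norm_eq_inner)
    ultimately show ?thesis using \<open>m \<le> q w\<close> mult_right_mono[OF \<open>m \<le> q w\<close> zero_le_power2[of "norm u"]] by (simp add: mult.commute)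
  qed
  define B where "B = (\<lambda>v. A *v v - m *\<^sub>R v)"
  have Bsym: "x \<bullet> B y = y \<bullet> B x" for x y
    unfolding B_def using symA[OF sym, of x y] by (simp add: inner_diff_right inner_commute)
  have Blin: "B (x + t *\<^sub>R w) = B x + t *\<^sub>R B w" for x t w
    by (simp add: B_def algebra_simps matrix_vector_right_distrib matrix_vector_mult_scaleR)
  have pnn: "u \<bullet> B u \<ge> 0" for u
    using lb[of u] by (simp add: B_def q_def inner_diff_right)
  have p0: "v0 \<bullet> B v0 = 0"
    using nv0 by (simp add: B_def q_def m_def inner_diff_right norm_eq_1)
  have key: "w \<bullet> B v0 = 0" for w
  proof -
    define a where "a = w \<bullet> B v0"
    define b where "b = w \<bullet> B w"
    have b0: "b \<ge> 0" using pnn[of w] by (simp add: b_def)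
    have exp: "(v0 + t *\<^sub>R w) \<bullet> B (v0 + t *\<^sub>R w) = 2*t*a + t^2*b" for t
      using Bsym[of v0 w] p0 by (simp add: Blin inner_add_left inner_add_right a_def b_def power2_eq_square algebra_simps)
    define t where "t = - a / (b+1)"
    have "0 \<le> 2*t*a + t^2*b" using pnn[of "v0 + t *\<^sub>R w"] exp[of t] by simp
    hence "0 \<le> (b+1)^2 * (2*t*a + t^2*b)" by simp
    also have "(b+1)^2 * (2*t*a + t^2*b) = - (a^2*(b+2))"
    proof -
      have tb: "t*(b+1) = -a" using b0 by (simp add: t_def)
      have "(b+1)^2*(2*t*a+t^2*b) = 2*a*(t*(b+1))*(b+1) + (t*(b+1))^2*b" by algebra
      also have "\<dots> = - (a^2*(b+2))" unfolding tb by algebra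
      finally show ?thesis .
    qed
    finally have "a^2*(b+2) \<le> 0" by simp
    hence "a^2 \<le> 0" using b0 by (smt (verit) mult_nonneg_nonneg zero_le_power2 mult_pos_pos)
    thus ?thesis unfolding a_def[symmetric] by simp
  qed
  have "B v0 = 0" using key[of "B v0"] by simp
  hence ev: "A *v v0 = m *\<^sub>R v0" by (simp add: B_def)
  have v0nz: "v0 \<noteq> 0" using nv0 by auto
  define E where "E = {l. \<exists>v. v \<noteq> 0 \<and> A *v v = l *\<^sub>R v}"
  have mE: "m \<in> E" using ev v0nz by (auto simp: E_def)
  have bdd: "bdd_below E"
  proof (rule bdd_belowI[of _ m])
    fix l assume "l \<in> E"
    then obtain v where v: "v \<noteq> 0" "A *v v = l *\<^sub>R v" by (auto simp: E_def)
    have "m * (v \<bullet> v) \<le> l * (v \<bullet> v)" using lb[of v] v by (simp add: q_def)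
    moreover have "v \<bullet> v > 0" using v by simp
    ultimately show "m \<le> l" by simp
  qed
  have "lambda_min A \<le> m" unfolding lambda_min_def E_def[symmetric] by (rule cInf_lower[OF mE bdd])
  hence "m > 0" using lm by simp
  thus ?thesis using lb[of x] by (smt (verit) q_def inner_ge_zero mult_nonneg_nonneg)
qed

lemma symJA: fixes J :: "real^'n^'n" assumes "transpose J = J"
  shows "transpose (J + alpha *\<^sub>R mat 1) = J + alpha *\<^sub>R mat 1"
  using assms by (simp add: transpose_def vec_eq_iff mat_def)

lemma Hderiv: fixes J :: "real^'n^'n" and x :: "real^'n" assumes sJ: "transpose J = J" shows "(H_obj J alpha beta has_derivative
   (\<lambda>h. beta * (\<Sum>i\<in>UNIV. (x$i)^3 * h$i) - h \<bullet> ((J + alpha *\<^sub>R mat 1) *v x))) (at x)"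
  (is "(_ has_derivative ?D) _")
proof -
  have bl: "bounded_linear (\<lambda>x::real^'n. (J + alpha *\<^sub>R mat 1) *v x)"
    by (simp add: linear_conv_bounded_linear[symmetric])
  show ?thesis
    unfolding H_alt [abs_def]
    apply (rule derivative_eq_intros bounded_linear.has_derivative[OF bounded_linear_vec_nth] bounded_linear.has_derivative[OF bl] has_derivative_ident refl)+
    apply (rule ext)
    apply (simp add: symA[OF symJA[OF sJ], of x] sum_distrib_left mult.commute mult.left_commute)
    done
qed

definition Tmap :: "real^'n^'n \<Rightarrow> real \<Rightarrow> real \<Rightarrow> real^'n \<Rightarrow> real^'n" where
  "Tmap J alpha beta x = (\<chi> i. root 3 ((((J + alpha *\<^sub>R mat 1) *v x) $ i) / beta))"

lemma descent_id:
  fixes J :: "real^'n^'n" and x :: "real^'n" and alpha beta :: real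
  assumes sJ: "transpose J = J" and b: "beta > 0"
  defines "A \<equiv> J + alpha *\<^sub>R mat 1"
  defines "y \<equiv> Tmap J alpha beta x"
  shows "H_obj J alpha beta x - H_obj J alpha beta y =
    1/2 * ((y - x) \<bullet> (A *v (y - x))) + beta * (\<Sum>i\<in>UNIV. (x$i)^4/4 - (y$i)^4/4 - (y$i)^3*(x$i - y$i))"
proof -
  have sA: "transpose A = A" unfolding A_def by (rule symJA[OF sJ])
  have cube: "beta * (y$i)^3 = (A *v x)$i" for i
    using b by (simp add: y_def Tmap_def A_def odd_real_root_pow)
  define d where "d = y - x"
  have yx: "y = x + d" by (simp add: d_def)
  have quad: "y \<bullet> (A *v y) = x \<bullet> (A *v x) + 2 * (d \<bullet> (A *v x)) + d \<bullet> (A *v d)"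
    unfolding yx using symA[OF sA, of x d]
    by (simp add: matrix_vector_right_distrib inner_add_left inner_add_right)
  have lin: "d \<bullet> (A *v x) = (\<Sum>i\<in>UNIV. (y$i - x$i) * (beta * (y$i)^3))"
    by (simp add: inner_vec_def cube d_def)
  have "beta * (\<Sum>i\<in>UNIV. (x$i)^4/4 - (y$i)^4/4 - (y$i)^3*(x$i - y$i))
      = beta/4 * (\<Sum>i\<in>UNIV. (x$i)^4) - beta/4 * (\<Sum>i\<in>UNIV. (y$i)^4) + (\<Sum>i\<in>UNIV. (y$i - x$i) * (beta * (y$i)^3))"
    by (simp add: sum_distrib_left sum_subtractf sum.distrib algebra_simps sum_divide_distrib)
  then show ?thesis
    unfolding H_alt A_def[symmetric] d_def[symmetric] using quad lin by (simp add: algebra_simps)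
qed

lemma descent:
  fixes J :: "real^'n^'n" and x :: "real^'n" and alpha beta :: real
  assumes sJ: "transpose J = J" and b: "beta > 0"
    and psdA: "\<And>v. v \<bullet> ((J + alpha *\<^sub>R mat 1) *v v) \<ge> 0"
  shows "H_obj J alpha beta (Tmap J alpha beta x) \<le> H_obj J alpha beta x"
    and "H_obj J alpha beta (Tmap J alpha beta x) = H_obj J alpha beta x \<Longrightarrow> Tmap J alpha beta x = x"
proof -
  define y where "y = Tmap J alpha beta x"
  define S where "S = (\<Sum>i\<in>UNIV. (x$i)^4/4 - (y$i)^4/4 - (y$i)^3*(x$i - y$i))"
  have S0: "S \<ge> 0" unfolding S_def by (intro sum_nonneg e_nonneg)
  have Q0: "(y - x) \<bullet> ((J + alpha *\<^sub>R mat 1) *v (y - x)) \<ge> 0" by (rule psdA)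
  have id: "H_obj J alpha beta x - H_obj J alpha beta y = 1/2 * ((y - x) \<bullet> ((J + alpha *\<^sub>R mat 1) *v (y - x))) + beta * S"
    unfolding S_def y_def by (rule descent_id[OF sJ b])
  show "H_obj J alpha beta (Tmap J alpha beta x) \<le> H_obj J alpha beta x"
  proof -
    have "beta * S \<ge> 0" using b S0 by simp
    thus ?thesis using id Q0 unfolding y_def[symmetric] by linarith
  qed
  assume eq: "H_obj J alpha beta (Tmap J alpha beta x) = H_obj J alpha beta x"
  have "beta * S \<ge> 0" using b S0 by simp
  hence "beta * S = 0" using id Q0 eq unfolding y_def[symmetric] by linarith
  hence "S = 0" using b by simp
  hence "\<forall>i\<in>UNIV. (x$i)^4/4 - (y$i)^4/4 - (y$i)^3*(x$i - y$i) = 0"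
  proof -
    have nn: "\<forall>i\<in>UNIV. 0 \<le> (x$i)^4/4 - (y$i)^4/4 - (y$i)^3*(x$i - y$i)" using e_nonneg by blast
    show ?thesis using \<open>S = 0\<close> unfolding S_def by (subst (asm) sum_nonneg_eq_0_iff) (use nn in auto)
  qed
  hence "\<forall>i. x$i = y$i" using e_zero by blast
  thus "Tmap J alpha beta x = x" by (simp add: y_def vec_eq_iff)
qed

lemma Tcont: fixes J :: "real^'n^'n" shows "continuous_on UNIV (Tmap J alpha beta)"
proof -
  have bl: "bounded_linear (\<lambda>x::real^'n. (J + alpha *\<^sub>R mat 1) *v x)"
    by (simp add: linear_conv_bounded_linear[symmetric])
  have c: "continuous_on UNIV (\<lambda>x::real^'n. (J + alpha *\<^sub>R mat 1) *v x)"
    by (rule linear_continuous_on[OF bl])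
  have ci: "continuous_on UNIV (\<lambda>x::real^'n. ((J + alpha *\<^sub>R mat 1) *v x) $ i)" for i
    by (rule continuous_on_compose2[OF linear_continuous_on[OF bounded_linear_vec_nth[of i]] c subset_UNIV])
  show ?thesis unfolding Tmap_def divide_inverse
    by (intro continuous_on_vec_lambda continuous_intros ci)
qed

theorem propositionS8:
  fixes J :: "real^'n^'n" and alpha beta :: real and x0 xstar :: "real^'n"
  assumes "transpose J = J"
    and "\<forall>i. J $ i $ i = 0"
    and "alpha > 0" and "beta > 0"
    and "lambda_min (J + alpha *\<^sub>R mat 1) > 0"
    and "\<exists>r. strict_mono r \<and> ((doch J alpha beta x0 \<circ> r) \<longlonglongrightarrow> xstar)"
  shows "(H_obj J alpha beta has_derivative (\<lambda>h. 0)) (at xstar)"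
proof -
  note sJ = assms(1) and b = assms(4)
  have sA: "transpose (J + alpha *\<^sub>R mat 1) = J + alpha *\<^sub>R mat 1" by (rule symJA[OF sJ])
  have psdA: "\<And>v. v \<bullet> ((J + alpha *\<^sub>R mat 1) *v v) \<ge> 0" by (rule psd[OF sA assms(5)])
  obtain r where r: "strict_mono r" and lim: "(doch J alpha beta x0 \<circ> r) \<longlonglongrightarrow> xstar" using assms(6) by blast
  define X where "X = doch J alpha beta x0"
  define H where "H = H_obj J alpha beta"
  define T where "T = Tmap J alpha beta"
  have XS: "X (Suc k) = T (X k)" for k by (simp add: X_def T_def Tmap_def)
  have Hcont: "continuous_on UNIV H" unfolding H_def
    by (rule has_derivative_continuous_on) (rule has_derivative_at_withinI, rule Hderiv[OF sJ])
  have dec: "decseq (\<lambda>k. H (X k))"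
    by (rule decseq_SucI) (simp add: XS H_def T_def descent(1)[OF sJ b psdA])
  have l1: "(\<lambda>k. H (X (r (Suc k)))) \<longlonglongrightarrow> H xstar"
    using continuous_on_tendsto_compose[OF Hcont LIMSEQ_Suc[OF lim]] by (simp add: X_def o_def)
  have l2: "(\<lambda>k. H (X (Suc (r k)))) \<longlonglongrightarrow> H (T xstar)"
  proof -
    have "(\<lambda>k. T (X (r k))) \<longlonglongrightarrow> T xstar"
      using continuous_on_tendsto_compose[OF Tcont lim] by (simp add: X_def o_def T_def)
    from continuous_on_tendsto_compose[OF Hcont this] show ?thesis by (simp add: XS)
  qed
  have le: "H (X (r (Suc k))) \<le> H (X (Suc (r k)))" for k
  proof -
    have "Suc (r k) \<le> r (Suc k)" using r by (simp add: Suc_le_eq strict_mono_less)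
    thus ?thesis using dec by (simp add: decseq_def)
  qed
  have "H xstar \<le> H (T xstar)" using LIMSEQ_le[OF l1 l2] le by blast
  moreover have "H (T xstar) \<le> H xstar" unfolding H_def T_def by (rule descent(1)[OF sJ b psdA])
  ultimately have "T xstar = xstar" unfolding H_def T_def using descent(2)[OF sJ b psdA] by simp
  hence fx: "beta * (xstar$i)^3 = ((J + alpha *\<^sub>R mat 1) *v xstar)$i" for i
  proof -
    have "xstar$i = root 3 (((J + alpha *\<^sub>R mat 1) *v xstar)$i / beta)"
      using \<open>T xstar = xstar\<close> unfolding T_def Tmap_def by (metis vec_lambda_beta)
    hence "(xstar$i)^3 = ((J + alpha *\<^sub>R mat 1) *v xstar)$i / beta" by (simp add: odd_real_root_pow)
    thus ?thesis using b by simp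
  qed
  have "(\<lambda>h. beta * (\<Sum>i\<in>UNIV. (xstar$i)^3 * h$i) - h \<bullet> ((J + alpha *\<^sub>R mat 1) *v xstar)) = (\<lambda>h. 0)"
    by (rule ext) (simp add: inner_vec_def sum_distrib_left fx[symmetric] mult.commute mult.left_commute)
  with Hderiv[OF sJ, of alpha beta xstar] show ?thesis by simp
qed

end
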